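(* Let $f:\mathbb{R}^n_{>0}\to\mathbb{R}^n_{>0}$ be order-preserving, homogeneous, and multiplicatively convex. If $\mathcal{G}(f)$ has a unique final class $C$, then $f$ is strongly nonnegative if and only if $r(f^{[n]\setminus C}_0)<r(f^C_0)$.
   Context: $[n]=\{1,\dots,n\}$; entrywise order. Order-preserving: $x\le y\Rightarrow f(x)\le f(y)$; homogeneous: $f(tx)=tf(x)$ for $t>0$; multiplicatively convex: each entry of $\log\circ f\circ\exp$ is convex. $f$ extends continuously to an order-preserving homogeneous map on $\mathbb{R}^n_{\ge0}$, again denoted $f$. $P^J_0(x)_j=x_j$ for $j\in J$, $0$ otherwise; $f^J_0=P^J_0fP^J_0$; $r(g)=\inf_{x\in\mathbb{R}^n_{>0}}\max_ig(x)_i/x_i$. $\mathcal{G}(f)$ is the directed graph on $[n]$ with an arc $i\to j$ when $\lim_{t\to\infty}f(\exp(te_{\{j\}}))_i=\infty$. A final class is a strongly connected component with no arcs leaving it. $f$ is strongly nonnegative if $r(f^C_0)=r(f)$ for every final class $C$ and $r(f^C_0)<r(f)$ for every non-final strongly connected component $C$. *)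

theory Defs
  imports "HOL-Analysis.Analysis"
begin

text \<open>Vectors in R^n are modelled as real^'n with 'n a finite index type ([n] = UNIV).\<close>

definition pos_vec :: "real^'n \<Rightarrow> bool" where
  "pos_vec x \<longleftrightarrow> (\<forall>i. 0 < x $ i)"

definition order_preserving :: "(real^'n \<Rightarrow> real^'n) \<Rightarrow> bool" where
  "order_preserving f \<longleftrightarrow>
     (\<forall>x y. pos_vec x \<longrightarrow> pos_vec y \<longrightarrow> (\<forall>i. x $ i \<le> y $ i) \<longrightarrow> (\<forall>i. f x $ i \<le> f y $ i))"

definition homogeneous :: "(real^'n \<Rightarrow> real^'n) \<Rightarrow> bool" where
  "homogeneous f \<longleftrightarrow> (\<forall>x t. pos_vec x \<longrightarrow> 0 < t \<longrightarrow> f (t *\<^sub>R x) = t *\<^sub>R f x)"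

definition mult_convex :: "(real^'n \<Rightarrow> real^'n) \<Rightarrow> bool" where
  "mult_convex f \<longleftrightarrow> (\<forall>i. convex_on UNIV (\<lambda>y::real^'n. ln (f (\<chi> k. exp (y $ k)) $ i)))"

definition pos_self_map :: "(real^'n \<Rightarrow> real^'n) \<Rightarrow> bool" where
  "pos_self_map f \<longleftrightarrow> (\<forall>x. pos_vec x \<longrightarrow> pos_vec (f x))"

text \<open>Continuous extension to the closed cone: on the open cone it is f itself; on the boundary
  it is the (decreasing) limit of f(x + e 1) as e tends to 0+, i.e. the infimum over e > 0.\<close>
definition ext_map :: "(real^'n \<Rightarrow> real^'n) \<Rightarrow> real^'n \<Rightarrow> real^'n" where
  "ext_map f x = (if pos_vec x then f x
     else (\<chi> i. INF e\<in>{0<..}. f (x + e *\<^sub>R (\<chi> k. 1)) $ i))"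

definition proj0 :: "'n set \<Rightarrow> real^'n \<Rightarrow> real^'n" where
  "proj0 J x = (\<chi> j. if j \<in> J then x $ j else 0)"

definition restr0 :: "'n set \<Rightarrow> (real^'n \<Rightarrow> real^'n) \<Rightarrow> real^'n \<Rightarrow> real^'n" where
  "restr0 J f = proj0 J \<circ> ext_map f \<circ> proj0 J"

definition spec_rad :: "(real^'n \<Rightarrow> real^'n) \<Rightarrow> real" where
  "spec_rad g = Inf {Max (range (\<lambda>i. g x $ i / x $ i)) | x. pos_vec x}"

definition graph_arc :: "(real^'n \<Rightarrow> real^'n) \<Rightarrow> 'n \<Rightarrow> 'n \<Rightarrow> bool" where
  "graph_arc f i j \<longleftrightarrow>
     filterlim (\<lambda>t. f (\<chi> k. exp (t * (if k = j then 1 else 0))) $ i) at_top at_top"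

definition scc :: "(real^'n \<Rightarrow> real^'n) \<Rightarrow> 'n set \<Rightarrow> bool" where
  "scc f C \<longleftrightarrow> C \<noteq> {} \<and>
     (\<forall>i\<in>C. \<forall>j\<in>C. (graph_arc f)\<^sup>*\<^sup>* i j) \<and>
     (\<forall>i\<in>C. \<forall>j. (graph_arc f)\<^sup>*\<^sup>* i j \<and> (graph_arc f)\<^sup>*\<^sup>* j i \<longrightarrow> j \<in> C)"

definition final_class :: "(real^'n \<Rightarrow> real^'n) \<Rightarrow> 'n set \<Rightarrow> bool" where
  "final_class f C \<longleftrightarrow> scc f C \<and> (\<forall>i\<in>C. \<forall>j. graph_arc f i j \<longrightarrow> j \<in> C)"

definition strongly_nonneg :: "(real^'n \<Rightarrow> real^'n) \<Rightarrow> bool" where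
  "strongly_nonneg f \<longleftrightarrow>
     (\<forall>C. final_class f C \<longrightarrow> spec_rad (restr0 C f) = spec_rad f) \<and>
     (\<forall>C. scc f C \<and> \<not> final_class f C \<longrightarrow> spec_rad (restr0 C f) < spec_rad f)"

end

theory Submission imports Defs begin

definition onev :: "real^'n" where "onev = (\<chi> k. 1)"

lemma onev_nth[simp]: "onev $ k = 1" by (simp add: onev_def)

lemma pos_vec_onev[simp]: "pos_vec onev" by (simp add: pos_vec_def)

lemma spec_rad_le:
  assumes nn: "\<And>x i. pos_vec x \<Longrightarrow> 0 \<le> g x $ i"
    and x: "pos_vec x" and le: "\<And>i. g x $ i \<le> c * x $ i"
  shows "spec_rad g \<le> c"
proof -
  have bdd: "bdd_below {Max (range (\<lambda>i. g x $ i / x $ i)) | x. pos_vec x}"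
  proof (rule bdd_belowI)
    fix m assume "m \<in> {Max (range (\<lambda>i. g x $ i / x $ i)) | x. pos_vec x}"
    then obtain y where y: "pos_vec y" "m = Max (range (\<lambda>i. g y $ i / y $ i))" by auto
    obtain i0 :: 'a where True by simp
    have "0 \<le> g y $ i0 / y $ i0" using nn[OF y(1)] y(1) by (simp add: pos_vec_def less_imp_le)
    also have "\<dots> \<le> m" using y(2) by (simp add: finite_imageI)
    finally show "0 \<le> m" .
  qed
  have "\<And>i. g x $ i / x $ i \<le> c" using le x by (simp add: pos_vec_def divide_le_eq)
  then have "Max (range (\<lambda>i. g x $ i / x $ i)) \<le> c"
    by (simp add: finite_imageI)
  moreover have "spec_rad g \<le> Max (range (\<lambda>i. g x $ i / x $ i))"
    unfolding spec_rad_def using bdd x by (intro cInf_lower) auto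
  ultimately show ?thesis by linarith
qed

lemma spec_rad_nonneg:
  assumes nn: "\<And>x i. pos_vec x \<Longrightarrow> 0 \<le> g x $ i"
  shows "0 \<le> spec_rad g"
  unfolding spec_rad_def
proof (rule cInf_greatest)
  show "{Max (range (\<lambda>i. g x $ i / x $ i)) | x. pos_vec x} \<noteq> {}"
    using pos_vec_onev by blast
  fix m assume "m \<in> {Max (range (\<lambda>i. g x $ i / x $ i)) | x. pos_vec x}"
  then obtain y where y: "pos_vec y" "m = Max (range (\<lambda>i. g y $ i / y $ i))" by auto
  obtain i0 :: 'a where True by simp
  have "0 \<le> g y $ i0 / y $ i0" using nn[OF y(1)] y(1) by (simp add: pos_vec_def less_imp_le)
  also have "\<dots> \<le> m" using y(2) by (simp add: finite_imageI)
  finally show "0 \<le> m" .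
qed

lemma spec_rad_approx:
  assumes nn: "\<And>x i. pos_vec x \<Longrightarrow> 0 \<le> g x $ i" and e: "0 < e"
  shows "\<exists>x. pos_vec x \<and> (\<forall>i. g x $ i < (spec_rad g + e) * x $ i)"
proof -
  let ?S = "{Max (range (\<lambda>i. g x $ i / x $ i)) | x. pos_vec x}"
  have bdd: "bdd_below ?S"
  proof (rule bdd_belowI)
    fix m assume "m \<in> ?S"
    then obtain y where y: "pos_vec y" "m = Max (range (\<lambda>i. g y $ i / y $ i))" by auto
    obtain i0 :: 'a where True by simp
    have "0 \<le> g y $ i0 / y $ i0" using nn[OF y(1)] y(1) by (simp add: pos_vec_def less_imp_le)
    also have "\<dots> \<le> m" using y(2) by (simp add: finite_imageI)
    finally show "0 \<le> m" .
  qed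
  have ne: "?S \<noteq> {}" using pos_vec_onev by blast
  have "Inf ?S < spec_rad g + e" using e by (simp add: spec_rad_def)
  then obtain m where "m \<in> ?S" "m < spec_rad g + e" using cInf_less_iff[OF ne bdd] by blast
  then obtain y where y: "pos_vec y" "Max (range (\<lambda>i. g y $ i / y $ i)) < spec_rad g + e" by auto
  have "\<forall>i. g y $ i < (spec_rad g + e) * y $ i"
  proof
    fix i
    have "g y $ i / y $ i \<le> Max (range (\<lambda>i. g y $ i / y $ i))" by (simp add: finite_imageI)
    then have "g y $ i / y $ i < spec_rad g + e" using y(2) by linarith
    then show "g y $ i < (spec_rad g + e) * y $ i" using y(1) by (simp add: pos_vec_def divide_less_eq)
  qed
  then show ?thesis using y(1) by blast
qed

lemma spec_rad_mono:
  assumes nn: "\<And>x i. pos_vec x \<Longrightarrow> 0 \<le> g x $ i"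
    and le: "\<And>x i. pos_vec x \<Longrightarrow> g x $ i \<le> h x $ i"
  shows "spec_rad g \<le> spec_rad h"
proof (rule field_le_epsilon)
  fix e :: real assume e: "0 < e"
  have nnh: "0 \<le> h x $ i" if "pos_vec x" for x i using nn[OF that, of i] le[OF that, of i] by linarith
  have "\<exists>x. pos_vec x \<and> (\<forall>i. h x $ i < (spec_rad h + e) * x $ i)"
    by (rule spec_rad_approx) (fact nnh, fact e)
  then obtain x where x: "pos_vec x" "\<forall>i. h x $ i < (spec_rad h + e) * x $ i" by blast
  have gle: "\<And>i. g x $ i \<le> (spec_rad h + e) * x $ i"
  proof -
    fix i
    have "g x $ i \<le> h x $ i" using le[OF x(1)] .
    moreover have "h x $ i < (spec_rad h + e) * x $ i" using x(2) by blast
    ultimately show "g x $ i \<le> (spec_rad h + e) * x $ i" by linarith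
  qed
  show "spec_rad g \<le> spec_rad h + e"
    by (rule spec_rad_le[where g=g and x=x]) (fact nn, fact x(1), fact gle)
qed

lemma spec_rad_cong:
  assumes "\<And>x. pos_vec x \<Longrightarrow> g x = h x"
  shows "spec_rad g = spec_rad h"
proof -
  have "{Max (range (\<lambda>i. g x $ i / x $ i)) | x. pos_vec x} = {Max (range (\<lambda>i. h x $ i / x $ i)) | x. pos_vec x}"
    unfolding setcompr_eq_image by (intro image_cong) (auto simp: assms)
  then show ?thesis by (simp add: spec_rad_def)
qed


definition nonneg :: "real^'n \<Rightarrow> bool" where "nonneg x \<longleftrightarrow> (\<forall>k. 0 \<le> x $ k)"

lemma pos_nonneg: "pos_vec x \<Longrightarrow> nonneg x"
  by (simp add: pos_vec_def nonneg_def less_imp_le)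

lemma nonneg_plus: "nonneg x \<Longrightarrow> 0 < e \<Longrightarrow> pos_vec (x + e *\<^sub>R onev)"
  by (simp add: pos_vec_def nonneg_def add_nonneg_pos)

locale pmap =
  fixes f :: "real^'n \<Rightarrow> real^'n"
  assumes pos: "pos_self_map f" and op: "order_preserving f" and hom: "homogeneous f"
    and mc: "mult_convex f"
begin

lemma fpos: "pos_vec x \<Longrightarrow> 0 < f x $ i"
  using pos by (simp add: pos_self_map_def pos_vec_def)

lemma fmono: "pos_vec x \<Longrightarrow> pos_vec y \<Longrightarrow> (\<And>k. x $ k \<le> y $ k) \<Longrightarrow> f x $ i \<le> f y $ i"
  using op unfolding order_preserving_def by blast

lemma fhom: "pos_vec x \<Longrightarrow> 0 < t \<Longrightarrow> f (t *\<^sub>R x) = t *\<^sub>R f x"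
  using hom by (simp add: homogeneous_def)

definition E :: "real^'n \<Rightarrow> 'n \<Rightarrow> real" where
  "E x i = (INF e\<in>{0<..}. f (x + e *\<^sub>R onev) $ i)"

lemma E_bdd: "nonneg x \<Longrightarrow> bdd_below ((\<lambda>e. f (x + e *\<^sub>R onev) $ i) ` {0<..})"
  by (rule bdd_belowI2[where m=0]) (auto intro: less_imp_le fpos nonneg_plus)

lemma E_le: "nonneg x \<Longrightarrow> 0 < e \<Longrightarrow> E x i \<le> f (x + e *\<^sub>R onev) $ i"
  unfolding E_def by (rule cINF_lower[OF E_bdd]) auto

lemma E_ge: "(\<And>e. 0 < e \<Longrightarrow> c \<le> f (x + e *\<^sub>R onev) $ i) \<Longrightarrow> c \<le> E x i"
  unfolding E_def by (rule cINF_greatest) auto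

lemma E_nonneg: "nonneg x \<Longrightarrow> 0 \<le> E x i"
  by (rule E_ge) (auto intro: less_imp_le fpos nonneg_plus)

lemma E_less:
  assumes x: "nonneg x" and l: "E x i < c"
  shows "\<exists>e>0. f (x + e *\<^sub>R onev) $ i < c"
proof -
  have b: "bdd_below ((\<lambda>e. f (x + e *\<^sub>R onev) $ i) ` {0<..})" by (rule E_bdd[OF x])
  have ne: "{0<..} \<noteq> ({}::real set)" using greaterThan_iff zero_less_one by blast
  have "(INF e\<in>{0<..}. f (x + e *\<^sub>R onev) $ i) < c" using l by (simp add: E_def)
  then show ?thesis using cINF_less_iff[OF ne b] by auto
qed

lemma E_mono: 
  assumes x: "nonneg x" and le: "\<And>k. x $ k \<le> y $ k"
  shows "E x i \<le> E y i"
proof (rule E_ge)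
  fix e :: real assume e: "0 < e"
  have y: "nonneg y" using x le unfolding nonneg_def by (meson order_trans)
  have "E x i \<le> f (x + e *\<^sub>R onev) $ i" by (rule E_le[OF x e])
  also have "\<dots> \<le> f (y + e *\<^sub>R onev) $ i"
    by (rule fmono) (auto intro: nonneg_plus x y e simp: le)
  finally show "E x i \<le> f (y + e *\<^sub>R onev) $ i" .
qed

lemma E_pos:
  assumes x: "pos_vec x"
  shows "E x i = f x $ i"
proof (rule antisym)
  show "f x $ i \<le> E x i"
    by (rule E_ge, rule fmono) (auto intro: x nonneg_plus pos_nonneg)
  show "E x i \<le> f x $ i"
  proof (rule field_le_epsilon)
    fix d :: real assume d: "0 < d"
    define m where "m = Min (range (\<lambda>k. x $ k))"
    have "m \<in> range (\<lambda>k. x $ k)" unfolding m_def by (rule Min_in) (auto simp: finite_imageI)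
    then have m: "0 < m" using x by (auto simp: pos_vec_def)
    have mle: "m \<le> x $ k" for k unfolding m_def by (rule Min_le) (auto simp: finite_imageI)
    define F where "F = f x $ i"
    have F: "0 < F" unfolding F_def by (rule fpos[OF x])
    define e where "e = d * m / F"
    have e: "0 < e" unfolding e_def using d m F by simp
    have "0 < e / m" using e m by simp
    then have t: "0 < 1 + e / m" by linarith
    have "E x i \<le> f (x + e *\<^sub>R onev) $ i" by (rule E_le[OF pos_nonneg[OF x] e])
    also have "\<dots> \<le> f ((1 + e / m) *\<^sub>R x) $ i"
    proof (rule fmono)
      show "pos_vec (x + e *\<^sub>R onev)" by (rule nonneg_plus[OF pos_nonneg[OF x] e])
      show "pos_vec ((1 + e / m) *\<^sub>R x)" using x t by (simp add: pos_vec_def)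
      fix k
      have "e * 1 \<le> e * (x $ k / m)" using mle[of k] m e by (intro mult_left_mono) auto
      then show "(x + e *\<^sub>R onev) $ k \<le> ((1 + e / m) *\<^sub>R x) $ k" by (simp add: algebra_simps)
    qed
    also have "\<dots> = (1 + e / m) * F" using fhom[OF x t] by (simp add: F_def)
    also have "\<dots> = F + d" using m F unfolding e_def by (simp add: field_simps)
    finally show "E x i \<le> f x $ i + d" by (simp add: F_def)
  qed
qed

lemma ext_eq: "nonneg x \<Longrightarrow> ext_map f x $ i = E x i"
proof (cases "pos_vec x")
  case True then show ?thesis by (simp add: ext_map_def E_pos)
next
  case False then show ?thesis by (simp add: ext_map_def E_def onev_def)
qed

lemma proj_nonneg: "pos_vec x \<Longrightarrow> nonneg (proj0 J x)"
  by (simp add: proj0_def nonneg_def pos_vec_def less_imp_le)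

lemma g_eq: "pos_vec x \<Longrightarrow> restr0 J f x $ i = (if i \<in> J then E (proj0 J x) i else 0)"
proof -
  assume x: "pos_vec x"
  have "restr0 J f x $ i = (if i \<in> J then ext_map f (proj0 J x) $ i else 0)"
    by (simp add: restr0_def proj0_def[of J "ext_map f (proj0 J x)"])
  then show ?thesis by (simp add: ext_eq proj_nonneg[OF x])
qed

lemma g_nonneg: "pos_vec x \<Longrightarrow> 0 \<le> restr0 J f x $ i"
  by (simp add: g_eq E_nonneg proj_nonneg)

lemma r_nonneg: "0 \<le> spec_rad (restr0 J f)"
  by (rule spec_rad_nonneg) (rule g_nonneg)

lemma r_mono:
  assumes "J \<subseteq> K"
  shows "spec_rad (restr0 J f) \<le> spec_rad (restr0 K f)"
proof (rule spec_rad_mono)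
  show "0 \<le> restr0 J f x $ i" if "pos_vec x" for x :: "real^'n" and i by (rule g_nonneg[OF that])
  fix x :: "real^'n" and i assume x: "pos_vec x"
  show "restr0 J f x $ i \<le> restr0 K f x $ i"
  proof (cases "i \<in> J")
    case True
    then have "i \<in> K" using assms by auto
    have "E (proj0 J x) i \<le> E (proj0 K x) i"
      by (rule E_mono[OF proj_nonneg[OF x]]) (use x assms in \<open>auto simp: proj0_def pos_vec_def less_imp_le\<close>)
    then show ?thesis using True \<open>i \<in> K\<close> by (simp add: g_eq[OF x])
  next
    case False
    then show ?thesis by (simp add: g_eq[OF x] g_nonneg[OF x, of K i, unfolded g_eq[OF x]])
  qed
qed

lemma r_univ: "spec_rad (restr0 UNIV f) = spec_rad f"
proof (rule spec_rad_cong)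
  fix x :: "real^'n" assume x: "pos_vec x"
  have p: "proj0 UNIV x = x" by (simp add: proj0_def vec_eq_iff)
  show "restr0 UNIV f x = f x" unfolding vec_eq_iff using x by (simp add: g_eq E_pos p)
qed

lemma r_empty: "spec_rad (restr0 {} f) = 0"
proof (rule antisym)
  show "spec_rad (restr0 {} f) \<le> 0"
    by (rule spec_rad_le[where x=onev]) (auto simp: g_eq g_nonneg)
  show "0 \<le> spec_rad (restr0 {} f)" by (rule r_nonneg)
qed

lemma r_f_pos: "0 < spec_rad f"
proof -
  define c where "c = Min (range (\<lambda>k. f onev $ k))"
  have "c \<in> range (\<lambda>k. f onev $ k)" unfolding c_def by (rule Min_in) (auto simp: finite_imageI)
  then have c: "0 < c" using fpos[OF pos_vec_onev] by auto
  have "c \<le> spec_rad f" unfolding spec_rad_def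
  proof (rule cInf_greatest)
    show "{Max (range (\<lambda>i. f x $ i / x $ i)) | x. pos_vec x} \<noteq> {}"
      using pos_vec_onev by blast
    fix M assume "M \<in> {Max (range (\<lambda>i. f x $ i / x $ i)) | x. pos_vec x}"
    then obtain x where x: "pos_vec x" and M: "M = Max (range (\<lambda>i. f x $ i / x $ i))" by auto
    define m where "m = Min (range (\<lambda>k. x $ k))"
    have "m \<in> range (\<lambda>k. x $ k)" unfolding m_def by (rule Min_in) (auto simp: finite_imageI)
    then obtain i0 where i0: "m = x $ i0" by auto
    have m: "0 < m" using x i0 by (simp add: pos_vec_def)
    have mle: "m \<le> x $ k" for k unfolding m_def by (rule Min_le) (auto simp: finite_imageI)
    have "m * c \<le> m * f onev $ i0" using m unfolding c_def by (intro mult_left_mono Min_le) (auto simp: finite_imageI)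
    also have "\<dots> = f (m *\<^sub>R onev) $ i0" using fhom[OF pos_vec_onev m] by simp
    also have "\<dots> \<le> f x $ i0" by (rule fmono) (use m mle x in \<open>auto simp: pos_vec_def\<close>)
    finally have "c \<le> f x $ i0 / x $ i0" using m i0 by (simp add: le_divide_eq mult.commute)
    also have "\<dots> \<le> M" unfolding M by (rule Max_ge) (auto simp: finite_imageI)
    finally show "c \<le> M" .
  qed
  then show ?thesis using c by linarith
qed


lemma noarc_bound:
  assumes na: "\<not> graph_arc f i j"
  shows "\<exists>B>0. \<forall>t. f (\<chi> k. exp (t * (if k = j then 1 else 0))) $ i \<le> B"
proof -
  define h where "h t = f (\<chi> k. exp (t * (if k = j then 1 else 0))) $ i" for t
  have hp: "pos_vec (\<chi> k. exp (t * (if k = j then 1 else 0)) :: real^'n)" for t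
    by (simp add: pos_vec_def)
  have hm: "h t \<le> h t'" if "t \<le> t'" for t t'
    unfolding h_def by (rule fmono[OF hp hp]) (use that in auto)
  have "\<exists>B. \<forall>t. h t \<le> B"
  proof (rule ccontr)
    assume nb: "\<not> (\<exists>B. \<forall>t. h t \<le> B)"
    have "filterlim h at_top at_top"
      unfolding filterlim_at_top eventually_at_top_linorder
    proof
      fix Z
      obtain t where "\<not> h t \<le> Z" using nb by blast
      then have "\<forall>n\<ge>t. Z \<le> h n" using hm by (meson le_cases order_trans)
      then show "\<exists>N. \<forall>n\<ge>N. Z \<le> h n" by blast
    qed
    then show False using na unfolding graph_arc_def h_def by simp
  qed
  then obtain B where "\<forall>t. h t \<le> B" by blast
  then have "\<forall>t. h t \<le> max B 1" by (meson max.coboundedI1)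
  then show ?thesis unfolding h_def by (intro exI[of _ "max B 1"]) auto
qed

lemma indep1:
  assumes na: "\<not> graph_arc f i j" and x: "pos_vec x" and c: "0 < c"
  shows "f (\<chi> k. if k = j then c else x $ k) $ i = f x $ i"
proof -
  define upd where "upd a = (\<chi> k. if k = j then exp a else x $ k)" for a
  define \<psi> where "\<psi> a = ln (f (upd a) $ i)" for a
  have up: "pos_vec (upd a)" for a using x unfolding upd_def pos_vec_def by auto
  have fup: "0 < f (upd a) $ i" for a by (rule fpos[OF up])
  have mono: "\<psi> a \<le> \<psi> b" if "a \<le> b" for a b
  proof -
    have "f (upd a) $ i \<le> f (upd b) $ i"
      by (rule fmono[OF up up]) (use that in \<open>auto simp: upd_def\<close>)
    then show ?thesis unfolding \<psi>_def using fup by simp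
  qed
  define Y where "Y a = (\<chi> k. if k = j then a else ln (x $ k))" for a
  have YE: "(\<chi> k. exp (Y a $ k)) = upd a" for a
    using x unfolding Y_def upd_def pos_vec_def by (simp add: vec_eq_iff)
  have conv: "\<psi> ((1 - l) * a + l * b) \<le> (1 - l) * \<psi> a + l * \<psi> b" if "0 \<le> l" "l \<le> 1" for l a b
  proof -
    have cv: "convex_on UNIV (\<lambda>y::real^'n. ln (f (\<chi> k. exp (y $ k)) $ i))"
      using mc unfolding mult_convex_def by blast
    have "(1 - l) *\<^sub>R Y a + l *\<^sub>R Y b = Y ((1 - l) * a + l * b)"
      unfolding Y_def by (simp add: vec_eq_iff algebra_simps)
    moreover have "ln (f (\<chi> k. exp (((1 - l) *\<^sub>R Y a + l *\<^sub>R Y b) $ k)) $ i)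
        \<le> (1 - l) * ln (f (\<chi> k. exp (Y a $ k)) $ i) + l * ln (f (\<chi> k. exp (Y b $ k)) $ i)"
      by (rule convex_onD[OF cv that]) auto
    ultimately show ?thesis unfolding \<psi>_def by (simp add: YE)
  qed
  obtain B where B: "0 < B" "\<forall>t. f (\<chi> k. exp (t * (if k = j then 1 else 0))) $ i \<le> B"
    using noarc_bound[OF na] by blast
  define M where "M = Max (range (\<lambda>k. x $ k))"
  have "M \<in> range (\<lambda>k. x $ k)" unfolding M_def by (rule Max_in) (auto simp: finite_imageI)
  then have M: "0 < M" using x by (auto simp: pos_vec_def)
  have Mge: "x $ k \<le> M" for k unfolding M_def by (rule Max_ge) (auto simp: finite_imageI)
  have bound: "\<psi> T \<le> ln (M * B)" for T
  proof -
    define v where "v = (\<chi> k. exp ((T - ln M) * (if k = j then 1 else 0)) :: real^'n)"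
    have vp: "pos_vec v" unfolding v_def by (simp add: pos_vec_def)
    have "f (upd T) $ i \<le> f (M *\<^sub>R v) $ i"
    proof (rule fmono[OF up])
      show "pos_vec (M *\<^sub>R v)" using vp M by (simp add: pos_vec_def)
      fix k show "upd T $ k \<le> (M *\<^sub>R v) $ k"
        using Mge[of k] M by (simp add: upd_def v_def exp_diff)
    qed
    also have "\<dots> = M * f v $ i" using fhom[OF vp M] by simp
    also have "\<dots> \<le> M * B" using B(2) M unfolding v_def by (simp add: mult_left_mono)
    finally show ?thesis unfolding \<psi>_def using fup by (simp add: ln_le_cancel_iff M B)
  qed
  have key: "\<psi> b \<le> \<psi> a" if ab: "a < b" for a b
  proof (rule ccontr)
    assume "\<not> \<psi> b \<le> \<psi> a"
    then have d: "0 < \<psi> b - \<psi> a" by simp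
    define L where "L = ln (M * B) - \<psi> a + 1"
    define T where "T = max (b + 1) (a + L * (b - a) / (\<psi> b - \<psi> a))"
    have Tb: "b < T" unfolding T_def by simp
    have TL: "L * (b - a) / (\<psi> b - \<psi> a) \<le> T - a" unfolding T_def by simp
    define l where "l = (b - a) / (T - a)"
    have l0: "0 < l" unfolding l_def using ab Tb by simp
    have l1: "l \<le> 1" unfolding l_def using ab Tb by simp
    have h: "l * (T - a) = b - a" unfolding l_def using ab Tb by simp
    have "(1 - l) * a + l * T = a + l * (T - a)" by (simp add: algebra_simps)
    then have lb: "(1 - l) * a + l * T = b" using h by simp
    have "\<psi> b \<le> (1 - l) * \<psi> a + l * \<psi> T" using conv[OF less_imp_le[OF l0] l1, of a T] lb by simp
    then have "\<psi> b - \<psi> a \<le> l * (\<psi> T - \<psi> a)" by (simp add: algebra_simps)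
    then have "(\<psi> b - \<psi> a) * (T - a) \<le> (b - a) * (\<psi> T - \<psi> a)"
      unfolding l_def using ab Tb by (simp add: field_simps)
    moreover have "L * (b - a) \<le> (T - a) * (\<psi> b - \<psi> a)"
      using TL d by (simp add: field_simps)
    ultimately have "L * (b - a) \<le> (b - a) * (\<psi> T - \<psi> a)" by (simp add: mult.commute)
    then have "L \<le> \<psi> T - \<psi> a" using ab by (simp add: mult.commute)
    then show False using bound[of T] unfolding L_def by simp
  qed
  have eq: "\<psi> a = \<psi> b" for a b
    using key mono by (metis linorder_neqE_linordered_idom order_antisym order_refl less_imp_le)
  have x1: "upd (ln (x $ j)) = x" using x unfolding upd_def pos_vec_def by (simp add: vec_eq_iff)
  have x2: "upd (ln c) = (\<chi> k. if k = j then c else x $ k)" using c unfolding upd_def by (simp add: vec_eq_iff)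
  have "ln (f (upd (ln c)) $ i) = ln (f (upd (ln (x $ j))) $ i)" using eq unfolding \<psi>_def by blast
  then have "f (upd (ln c)) $ i = f (upd (ln (x $ j))) $ i" using fup by simp
  then show ?thesis using x1 x2 by simp
qed


lemma indep_gen:
  assumes "finite D" and x': "pos_vec x'"
  shows "\<forall>x. pos_vec x \<longrightarrow> (\<forall>j. j \<notin> D \<longrightarrow> x $ j = x' $ j) \<longrightarrow> (\<forall>j\<in>D. \<not> graph_arc f i j)
     \<longrightarrow> f x $ i = f x' $ i"
  using assms(1)
proof (induction D rule: finite_induct)
  case empty
  show ?case
  proof (intro allI impI)
    fix x :: "real^'n" assume "\<forall>j. j \<notin> {} \<longrightarrow> x $ j = x' $ j"
    then have "x = x'" by (simp add: vec_eq_iff)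
    then show "f x $ i = f x' $ i" by simp
  qed
next
  case (insert a D)
  show ?case
  proof (intro allI impI)
    fix x :: "real^'n" assume x: "pos_vec x" and ag: "\<forall>j. j \<notin> insert a D \<longrightarrow> x $ j = x' $ j"
      and na: "\<forall>j\<in>insert a D. \<not> graph_arc f i j"
    define z where "z = (\<chi> k. if k = a then x' $ a else x $ k)"
    have z: "pos_vec z" using x x' unfolding z_def pos_vec_def by auto
    have "f z $ i = f x $ i" unfolding z_def
      by (rule indep1) (use na x x' in \<open>auto simp: pos_vec_def\<close>)
    moreover have "f z $ i = f x' $ i"
    proof -
      have agz: "\<forall>j. j \<notin> D \<longrightarrow> z $ j = x' $ j" using ag unfolding z_def by auto
      have naD: "\<forall>j\<in>D. \<not> graph_arc f i j" using na by blast
      note h = spec[OF insert.IH, of z]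
      show ?thesis using h z agz naD by blast
    qed
    ultimately show "f x $ i = f x' $ i" by simp
  qed
qed

lemma indep:
  assumes x: "pos_vec x" and x': "pos_vec x'" and na: "\<forall>j. x $ j \<noteq> x' $ j \<longrightarrow> \<not> graph_arc f i j"
  shows "f x $ i = f x' $ i"
proof -
  have fin: "finite {j. x $ j \<noteq> x' $ j}" by simp
  note h = spec[OF indep_gen[OF fin x', of i], of x]
  have a1: "\<forall>j. j \<notin> {j. x $ j \<noteq> x' $ j} \<longrightarrow> x $ j = x' $ j" by blast
  have a2: "\<forall>j\<in>{j. x $ j \<noteq> x' $ j}. \<not> graph_arc f i j" using na by blast
  show ?thesis using h x a1 a2 by blast
qed

lemma split_bound:
  assumes KJ: "K \<subseteq> J" and na: "\<forall>i\<in>K. \<forall>j\<in>J - K. \<not> graph_arc f i j"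
  shows "spec_rad (restr0 J f) \<le> max (spec_rad (restr0 K f)) (spec_rad (restr0 (J - K) f))"
proof (rule field_le_epsilon)
  fix \<epsilon> :: real assume ep: "0 < \<epsilon>"
  define L where "L = J - K"
  define rK where "rK = spec_rad (restr0 K f)"
  define rL where "rL = spec_rad (restr0 L f)"
  define R where "R = max rK rL"
  have R0: "0 \<le> R" unfolding R_def rK_def using r_nonneg[of K] by simp
  have "\<exists>x. pos_vec x \<and> (\<forall>i. restr0 K f x $ i < (rK + \<epsilon>) * x $ i)"
    unfolding rK_def by (rule spec_rad_approx) (fact g_nonneg, fact ep)
  then obtain x where x: "pos_vec x" and xK: "\<forall>i. restr0 K f x $ i < (rK + \<epsilon>) * x $ i" by blast
  have "\<exists>y. pos_vec y \<and> (\<forall>i. restr0 L f y $ i < (rL + \<epsilon>) * y $ i)"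
    unfolding rL_def by (rule spec_rad_approx) (fact g_nonneg, fact ep)
  then obtain y where y: "pos_vec y" and yL: "\<forall>i. restr0 L f y $ i < (rL + \<epsilon>) * y $ i" by blast
  have "\<forall>i\<in>L. \<exists>e>0. f (proj0 L y + e *\<^sub>R onev) $ i < (rL + \<epsilon>) * y $ i"
  proof
    fix i assume i: "i \<in> L"
    have "E (proj0 L y) i < (rL + \<epsilon>) * y $ i" using yL[rule_format, of i] i by (simp add: g_eq[OF y])
    then show "\<exists>e>0. f (proj0 L y + e *\<^sub>R onev) $ i < (rL + \<epsilon>) * y $ i"
      by (rule E_less[OF proj_nonneg[OF y]])
  qed
  from bchoice[OF this] obtain es where es: "\<forall>i\<in>L. 0 < es i \<and> f (proj0 L y + es i *\<^sub>R onev) $ i < (rL + \<epsilon>) * y $ i"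
    by blast
  define e0 where "e0 = Min (insert 1 (es ` L))"
  have e0: "0 < e0" unfolding e0_def using es by (subst Min_gr_iff) auto
  have e0le: "e0 \<le> es i" if "i \<in> L" for i unfolding e0_def using that by (intro Min_le) auto
  have yL2: "f (proj0 L y + e0 *\<^sub>R onev) $ i < (rL + \<epsilon>) * y $ i" if i: "i \<in> L" for i
  proof -
    have "f (proj0 L y + e0 *\<^sub>R onev) $ i \<le> f (proj0 L y + es i *\<^sub>R onev) $ i"
      by (rule fmono) (use e0 es i e0le[OF i] proj_nonneg[OF y] in \<open>auto intro: nonneg_plus\<close>)
    then show ?thesis using es i by fastforce
  qed
  define Mx where "Mx = Max (range (\<lambda>k. x $ k))"
  have "Mx \<in> range (\<lambda>k. x $ k)" unfolding Mx_def by (rule Max_in) (auto simp: finite_imageI)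
  then have Mx: "0 < Mx" using x by (auto simp: pos_vec_def)
  have Mge: "x $ k \<le> Mx" for k unfolding Mx_def by (rule Max_ge) (auto simp: finite_imageI)
  define s where "s = 2 * Mx / e0"
  have s: "0 < s" unfolding s_def using Mx e0 by simp
  define z where "z = (\<chi> k. if k \<in> K then x $ k else if k \<in> J then s * y $ k else 1)"
  have z: "pos_vec z" using x y s unfolding z_def pos_vec_def by auto
  have pz: "proj0 J z $ k = (if k \<in> K then x $ k else if k \<in> J then s * y $ k else 0)" for k
    using KJ unfolding z_def proj0_def by auto
  have main: "restr0 J f z $ i \<le> (R + \<epsilon>) * z $ i" for i
  proof -
    consider "i \<notin> J" | "i \<in> K" | "i \<in> L" unfolding L_def by blast
    then show ?thesis
    proof cases
      case 1
      then show ?thesis using z R0 ep by (simp add: g_eq[OF z] pos_vec_def less_imp_le)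
    next
      case 2
      then have iJ: "i \<in> J" using KJ by auto
      have "E (proj0 J z) i = E (proj0 K x) i" unfolding E_def
      proof (rule INF_cong[OF refl])
        fix e :: real assume "e \<in> {0<..}"
        then have e: "0 < e" by simp
        show "f (proj0 J z + e *\<^sub>R onev) $ i = f (proj0 K x + e *\<^sub>R onev) $ i"
        proof (rule indep)
          show "pos_vec (proj0 J z + e *\<^sub>R onev)" by (rule nonneg_plus[OF proj_nonneg[OF z] e])
          show "pos_vec (proj0 K x + e *\<^sub>R onev)" by (rule nonneg_plus[OF proj_nonneg[OF x] e])
          show "\<forall>j. (proj0 J z + e *\<^sub>R onev) $ j \<noteq> (proj0 K x + e *\<^sub>R onev) $ j \<longrightarrow> \<not> graph_arc f i j"
          proof (intro allI impI)
            fix j assume "(proj0 J z + e *\<^sub>R onev) $ j \<noteq> (proj0 K x + e *\<^sub>R onev) $ j"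
            then have "j \<in> J - K" using KJ by (auto simp: pz proj0_def[of K x] split: if_splits)
            then show "\<not> graph_arc f i j" using na 2 by blast
          qed
        qed
      qed
      then have "restr0 J f z $ i = restr0 K f x $ i" using 2 iJ by (simp add: g_eq[OF z] g_eq[OF x])
      also have "\<dots> < (rK + \<epsilon>) * x $ i" using xK by blast
      also have "\<dots> \<le> (R + \<epsilon>) * z $ i"
        using 2 x unfolding z_def R_def by (auto simp: pos_vec_def intro!: mult_right_mono)
      finally show ?thesis by simp
    next
      case 3
      then have iJ: "i \<in> J" and iK: "i \<notin> K" unfolding L_def by auto
      define v where "v = (\<chi> k. if k \<in> K then x $ k / s + e0 / 2 else if k \<in> J then y $ k + e0 / 2 else e0 / 2)"
      have vp: "pos_vec v" unfolding v_def pos_vec_def using x y s e0 by (auto simp: pos_vec_def intro: add_pos_pos)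
      have se: "0 < s * e0 / 2" using s e0 by simp
      have "E (proj0 J z) i \<le> f (proj0 J z + (s * e0 / 2) *\<^sub>R onev) $ i"
        by (rule E_le[OF proj_nonneg[OF z] se])
      also have "proj0 J z + (s * e0 / 2) *\<^sub>R onev = s *\<^sub>R v"
        using s unfolding vec_eq_iff v_def by (simp add: pz field_simps)
      also have "f (s *\<^sub>R v) $ i = s * f v $ i" using fhom[OF vp s] by simp
      also have "f v $ i \<le> f (proj0 L y + e0 *\<^sub>R onev) $ i"
      proof (rule fmono[OF vp])
        show "pos_vec (proj0 L y + e0 *\<^sub>R onev)" by (rule nonneg_plus[OF proj_nonneg[OF y] e0])
        fix k
        have "x $ k / s \<le> e0 / 2" using Mge[of k] s e0 Mx unfolding s_def by (simp add: field_simps)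
        then show "v $ k \<le> (proj0 L y + e0 *\<^sub>R onev) $ k"
        proof (cases "k \<in> K")
          case True
          then have "v $ k = x $ k / s + e0 / 2" "(proj0 L y + e0 *\<^sub>R onev) $ k = e0"
            unfolding v_def proj0_def L_def by auto
          then show ?thesis using \<open>x $ k / s \<le> e0 / 2\<close> by linarith
        next
          case False
          then show ?thesis using e0 unfolding v_def proj0_def L_def by auto
        qed
      qed
      then have "s * f v $ i \<le> s * f (proj0 L y + e0 *\<^sub>R onev) $ i" using s by simp
      also have "\<dots> \<le> s * ((rL + \<epsilon>) * y $ i)" using yL2[OF 3] s by simp
      also have "\<dots> = (rL + \<epsilon>) * z $ i" using iJ iK unfolding z_def by simp
      also have "\<dots> \<le> (R + \<epsilon>) * z $ i"
        using z unfolding R_def by (auto simp: pos_vec_def intro!: mult_right_mono)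
      finally show ?thesis using iJ by (simp add: g_eq[OF z])
    qed
  qed
  have "spec_rad (restr0 J f) \<le> R + \<epsilon>"
    by (rule spec_rad_le[where x=z]) (fact g_nonneg, fact z, fact main)
  then show "spec_rad (restr0 J f) \<le> max (spec_rad (restr0 K f)) (spec_rad (restr0 (J - K) f)) + \<epsilon>"
    unfolding R_def rK_def rL_def L_def .
qed


lemma scc_eq:
  assumes "scc f C1" "scc f C2" "k \<in> C1" "k \<in> C2"
  shows "C1 = C2"
proof -
  have "j \<in> C2" if "j \<in> C1" for j
    using assms that unfolding scc_def by blast
  moreover have "j \<in> C1" if "j \<in> C2" for j
    using assms that unfolding scc_def by blast
  ultimately show ?thesis by blast
qed

lemma induct_part:
  assumes snn: "strongly_nonneg f" and fc: "final_class f C"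
    and uniq: "\<forall>C'. final_class f C' \<longrightarrow> C' = C"
  shows "J \<subseteq> - C \<Longrightarrow> J \<noteq> {} \<Longrightarrow> spec_rad (restr0 J f) < spec_rad f"
proof (induction "card J" arbitrary: J rule: less_induct)
  case less
  define S where "S i = {j \<in> J. (graph_arc f)\<^sup>*\<^sup>* i j}" for i
  obtain i0 where "i0 \<in> J" using less.prems by blast
  obtain i where i: "i \<in> J" and imin: "\<forall>i'. i' \<in> J \<longrightarrow> card (S i) \<le> card (S i')"
    using ex_has_least_nat[of "\<lambda>i. i \<in> J" i0 "\<lambda>i. card (S i)"] \<open>i0 \<in> J\<close> by blast
  define K where "K = S i"
  have KJ: "K \<subseteq> J" unfolding K_def S_def by blast
  have iK: "i \<in> K" unfolding K_def S_def using i by simp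
  have na: "\<forall>k\<in>K. \<forall>j\<in>J - K. \<not> graph_arc f k j"
  proof (intro ballI notI)
    fix k j assume k: "k \<in> K" and j: "j \<in> J - K" and a: "graph_arc f k j"
    have "(graph_arc f)\<^sup>*\<^sup>* i k" using k unfolding K_def S_def by blast
    then have "(graph_arc f)\<^sup>*\<^sup>* i j" using a by (rule rtranclp.rtrancl_into_rtrancl)
    then show False using j unfolding K_def S_def by blast
  qed
  have bk: "(graph_arc f)\<^sup>*\<^sup>* k i" if k: "k \<in> K" for k
  proof -
    have ik: "(graph_arc f)\<^sup>*\<^sup>* i k" using k unfolding K_def S_def by blast
    have sub: "S k \<subseteq> S i" unfolding S_def using ik by (auto intro: rtranclp_trans)
    have "card (S i) \<le> card (S k)" using imin k KJ by blast
    moreover have "card (S k) \<le> card (S i)" by (rule card_mono[OF _ sub]) (simp add: S_def)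
    ultimately have "card (S k) = card (S i)" by linarith
    then have "S k = S i" using sub by (intro card_subset_eq) (auto simp: S_def)
    then have "i \<in> S k" using iK unfolding K_def by simp
    then show ?thesis unfolding S_def by blast
  qed
  define C' where "C' = {j. (graph_arc f)\<^sup>*\<^sup>* i j \<and> (graph_arc f)\<^sup>*\<^sup>* j i}"
  have sccC': "scc f C'"
    unfolding scc_def
  proof (intro conjI ballI allI impI)
    show "C' \<noteq> {}" unfolding C'_def by blast
    fix j1 j2 assume "j1 \<in> C'" "j2 \<in> C'"
    then have "(graph_arc f)\<^sup>*\<^sup>* j1 i" "(graph_arc f)\<^sup>*\<^sup>* i j2" unfolding C'_def by auto
    then show "(graph_arc f)\<^sup>*\<^sup>* j1 j2" by (rule rtranclp_trans)
  next
    fix j1 j assume "j1 \<in> C'" "(graph_arc f)\<^sup>*\<^sup>* j1 j \<and> (graph_arc f)\<^sup>*\<^sup>* j j1"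
    then have "(graph_arc f)\<^sup>*\<^sup>* i j1" "(graph_arc f)\<^sup>*\<^sup>* j1 i"
      "(graph_arc f)\<^sup>*\<^sup>* j1 j" "(graph_arc f)\<^sup>*\<^sup>* j j1" unfolding C'_def by auto
    then have "(graph_arc f)\<^sup>*\<^sup>* i j" "(graph_arc f)\<^sup>*\<^sup>* j i" by (auto intro: rtranclp_trans)
    then show "j \<in> C'" unfolding C'_def by simp
  qed
  have KC': "K \<subseteq> C'" using bk unfolding C'_def K_def S_def by blast
  have "\<not> final_class f C'"
  proof
    assume "final_class f C'"
    then have "C' = C" using uniq by blast
    moreover have "i \<in> C'" unfolding C'_def by simp
    ultimately show False using i less.prems(1) by blast
  qed
  then have rC': "spec_rad (restr0 C' f) < spec_rad f"
    using snn sccC' unfolding strongly_nonneg_def by blast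
  have rK: "spec_rad (restr0 K f) < spec_rad f"
    using r_mono[OF KC'] rC' by linarith
  show ?case
  proof (cases "J - K = {}")
    case True
    then have "J = K" using KJ by blast
    then show ?thesis using rK by simp
  next
    case False
    have "card (J - K) < card J" using iK KJ by (intro psubset_card_mono) auto
    then have rL: "spec_rad (restr0 (J - K) f) < spec_rad f"
      using less.hyps[of "J - K"] False less.prems(1) by blast
    show ?thesis using split_bound[OF KJ na] rK rL by linarith
  qed
qed

end

theorem lemma4p8:
  fixes f :: "real^'n \<Rightarrow> real^'n" and C :: "'n set"
  assumes "pos_self_map f" and "order_preserving f" and "homogeneous f" and "mult_convex f"
    and "final_class f C" and "\<forall>C'. final_class f C' \<longrightarrow> C' = C"
  shows "strongly_nonneg f \<longleftrightarrow> spec_rad (restr0 (- C) f) < spec_rad (restr0 C f)"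
proof -
  interpret pmap f using assms(1-4) by unfold_locales
  note fc = assms(5) and uniq = assms(6)
  show ?thesis
  proof
    assume snn: "strongly_nonneg f"
    have rC: "spec_rad (restr0 C f) = spec_rad f" using snn fc unfolding strongly_nonneg_def by blast
    show "spec_rad (restr0 (- C) f) < spec_rad (restr0 C f)"
    proof (cases "- C = {}")
      case True
      then show ?thesis using r_empty r_f_pos rC by simp
    next
      case False
      then show ?thesis using induct_part[OF snn fc uniq, of "- C"] rC by simp
    qed
  next
    assume lt: "spec_rad (restr0 (- C) f) < spec_rad (restr0 C f)"
    have na: "\<forall>i\<in>C. \<forall>j\<in>UNIV - C. \<not> graph_arc f i j" using fc unfolding final_class_def by blast
    have "spec_rad (restr0 UNIV f) \<le> max (spec_rad (restr0 C f)) (spec_rad (restr0 (UNIV - C) f))"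
      by (rule split_bound[OF _ na]) simp
    then have le1: "spec_rad f \<le> spec_rad (restr0 C f)" using lt r_univ
      by (simp add: Compl_eq_Diff_UNIV[symmetric])
    have le2: "spec_rad (restr0 C f) \<le> spec_rad f" using r_mono[of C UNIV] r_univ by simp
    have rC: "spec_rad (restr0 C f) = spec_rad f" using le1 le2 by linarith
    have sccC: "scc f C" using fc unfolding final_class_def by blast
    show "strongly_nonneg f" unfolding strongly_nonneg_def
    proof (intro conjI allI impI)
      fix C'' assume "final_class f C''"
      then have "C'' = C" using uniq by blast
      then show "spec_rad (restr0 C'' f) = spec_rad f" using rC by simp
    next
      fix C' assume a: "scc f C' \<and> \<not> final_class f C'"
      have "C' \<subseteq> - C"
      proof
        fix k assume k: "k \<in> C'"
        show "k \<in> - C"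
        proof
          assume "k \<in> C"
          then have "C' = C" using scc_eq[OF _ sccC k] a by blast
          then show False using a fc by simp
        qed
      qed
      then have "spec_rad (restr0 C' f) \<le> spec_rad (restr0 (- C) f)" by (rule r_mono)
      then show "spec_rad (restr0 C' f) < spec_rad f" using lt rC by linarith
    qed
  qed
qed

end
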